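(* Let $\lambda>0$, $A\in\mathbb{R}^{m\times n}$, $b\in\mathbb{R}^m$, and let $\mathcal{X}\subseteq\mathbb{R}^n$ be a closed hyperrectangle with $0\in\mathcal{X}$. Consider the three problems $\min_{x\in\mathcal{X}}\ \lambda\frac{\|x\|_1^2}{\|x\|_2^2}+q(Ax-b)$ (objective defined for $x\neq0$) with respectively (G) $q(y)=\frac12\|y\|_2^2$; (C) $q(y)=\sum_{i=1}^m\log(1+\gamma^{-2}y_i^2)$ for a fixed $\gamma>0$; (R) $q(y)=\frac12\mathrm{dist}^2(y,S_r)$ with $S_r=\{z\in\mathbb{R}^m:\|z\|_0\le r\}$ for a fixed positive integer $r$; and for each problem assume $\nu^\star<\lambda+q(-b)$, where $\nu^\star$ is the infimum of its objective over $\mathcal{X}\setminus\{0\}$. Then: (i) if $\mathcal{X}$ is bounded, each of the problems (G), (C), (R) has a nonempty set of optimal solutions; (ii) if $m<n$, $\dim\ker A=n-m$, $\ker A$ has the $s$-spherical section property for some $s>0$, and for the respective $q$ there exists $\widetilde{x}\in\mathbb{R}^n$ with $0\neq\widetilde{x}\in\arg\min_{x\in\mathcal{X}}q(Ax-b)$ and $\|\widetilde{x}\|_0<m/s$, then each of problems (G) and (C) has a nonempty set of optimal solutions.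
   Context: A closed hyperrectangle is a set $\{x:\underline{x}\le x\le\overline{x}\}$ with $\underline{x}\in(\mathbb{R}\cup\{-\infty\})^n$, $\overline{x}\in(\mathbb{R}\cup\{+\infty\})^n$. An optimal solution is a point of $\mathcal{X}\setminus\{0\}$ attaining $\nu^\star$. $\|x\|_0$ counts nonzero entries. An $(n-m)$-dimensional subspace $V$ has the $s$-spherical section property if $\inf_{v\in V\setminus\{0\}}\|v\|_1/\|v\|_2\ge\sqrt{m/s}$. The inequality $\nu^\star<\lambda+q(-b)$ is a standing assumption of the paper. *)

theory Defs
  imports "HOL-Analysis.Analysis"
begin

text \<open>Vectors in R^n are modelled as real^'n, R^m as real^'m; A :: real^'n^'m (an m x n matrix).\<close>

definition l1norm :: "real^'n \<Rightarrow> real" where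
  "l1norm x = (\<Sum>i\<in>UNIV. \<bar>x $ i\<bar>)"

definition l0norm :: "real^'n \<Rightarrow> nat" where
  "l0norm x = card {i. x $ i \<noteq> 0}"

text \<open>Closed hyperrectangle with lower bounds in R \<union> {-\<infinity>} and upper bounds in R \<union> {+\<infinity>}.\<close>
definition hyperrect :: "('n \<Rightarrow> ereal) \<Rightarrow> ('n \<Rightarrow> ereal) \<Rightarrow> (real^'n) set" where
  "hyperrect lo hi = {x. \<forall>i. lo i \<le> ereal (x $ i) \<and> ereal (x $ i) \<le> hi i}"

definition is_closed_hyperrect :: "(real^'n) set \<Rightarrow> bool" where
  "is_closed_hyperrect X \<longleftrightarrow> (\<exists>lo hi. (\<forall>i. lo i \<noteq> \<infinity> \<and> hi i \<noteq> -\<infinity>) \<and> X = hyperrect lo hi)"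

definition obj :: "real \<Rightarrow> (real^'m \<Rightarrow> real) \<Rightarrow> real^'n^'m \<Rightarrow> real^'m \<Rightarrow> real^'n \<Rightarrow> real" where
  "obj lam q A b x = lam * (l1norm x ^ 2 / (norm x) ^ 2) + q (A *v x - b)"

definition nu_star :: "real \<Rightarrow> (real^'m \<Rightarrow> real) \<Rightarrow> real^'n^'m \<Rightarrow> real^'m \<Rightarrow> (real^'n) set \<Rightarrow> ereal" where
  "nu_star lam q A b X = (INF x\<in>X - {0}. ereal (obj lam q A b x))"

definition standing_assm :: "real \<Rightarrow> (real^'m \<Rightarrow> real) \<Rightarrow> real^'n^'m \<Rightarrow> real^'m \<Rightarrow> (real^'n) set \<Rightarrow> bool" where
  "standing_assm lam q A b X \<longleftrightarrow> nu_star lam q A b X < ereal (lam + q (- b))"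

definition optimal_solutions :: "real \<Rightarrow> (real^'m \<Rightarrow> real) \<Rightarrow> real^'n^'m \<Rightarrow> real^'m \<Rightarrow> (real^'n) set \<Rightarrow> (real^'n) set" where
  "optimal_solutions lam q A b X = {x \<in> X - {0}. ereal (obj lam q A b x) = nu_star lam q A b X}"

definition qG :: "real^'m \<Rightarrow> real" where
  "qG y = (1/2) * (norm y) ^ 2"

definition qC :: "real \<Rightarrow> real^'m \<Rightarrow> real" where
  "qC \<gamma> y = (\<Sum>i\<in>UNIV. ln (1 + (y $ i) ^ 2 / \<gamma> ^ 2))"

definition sparse_set :: "nat \<Rightarrow> (real^'m) set" where
  "sparse_set r = {z. l0norm z \<le> r}"

definition qR :: "nat \<Rightarrow> real^'m \<Rightarrow> real" where
  "qR r y = (1/2) * (infdist y (sparse_set r)) ^ 2"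

definition spherical_section :: "real \<Rightarrow> nat \<Rightarrow> (real^'n) set \<Rightarrow> bool" where
  "spherical_section s m V \<longleftrightarrow>
     Inf ((\<lambda>v. l1norm v / norm v) ` (V - {0})) \<ge> sqrt (real m / s)"

definition argmin_on :: "(real^'n \<Rightarrow> real) \<Rightarrow> (real^'n) set \<Rightarrow> (real^'n) set" where
  "argmin_on f X = {x \<in> X. \<forall>y\<in>X. f x \<le> f y}"

end

theory Submission imports Defs begin

lemma norm_sq_sum: "(norm (x::real^'n))^2 = (\<Sum>i\<in>UNIV. (x$i)^2)"
  unfolding power2_norm_eq_inner inner_vec_def by (simp add: power2_eq_square)

lemma l1_ge_norm: "norm x \<le> l1norm x"
  unfolding l1norm_def by (rule norm_le_l1_cart)

lemma l1_nonneg: "l1norm x \<ge> 0"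
  unfolding l1norm_def by (simp add: sum_nonneg)

lemma l1_scale: "l1norm (c *\<^sub>R x) = \<bar>c\<bar> * l1norm x"
  unfolding l1norm_def by (simp add: abs_mult sum_distrib_left)

lemma l1_sq_le: "(l1norm (x::real^'n))^2 \<le> real (l0norm x) * (norm x)^2"
proof -
  let ?S = "{i. x $ i \<noteq> 0}"
  have "l1norm x = (\<Sum>i\<in>?S. \<bar>x$i\<bar>)"
    unfolding l1norm_def by (rule sum.mono_neutral_right) auto
  hence "l1norm x = (\<Sum>i\<in>?S. \<bar>x$i\<bar> * 1)" by simp
  hence "(l1norm x)^2 \<le> (\<Sum>i\<in>?S. (\<bar>x$i\<bar>)^2) * (\<Sum>i\<in>?S. 1^2)"
    using Cauchy_Schwarz_ineq_sum[of "\<lambda>i. \<bar>x$i\<bar>" "\<lambda>_. 1" ?S] by simp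
  also have "(\<Sum>i\<in>?S. (\<bar>x$i\<bar>)^2) = (norm x)^2"
    unfolding norm_sq_sum power2_abs by (rule sum.mono_neutral_left) auto
  also have "(\<Sum>i\<in>?S. (1::real)^2) = real (l0norm x)"
    unfolding l0norm_def by simp
  finally show ?thesis by (simp add: mult.commute)
qed

definition ratio :: "real^'n \<Rightarrow> real" where
  "ratio x = l1norm x ^ 2 / (norm x)^2"

lemma ratio_nonneg: "ratio x \<ge> 0" unfolding ratio_def by simp

lemma ratio_ge1: "x \<noteq> 0 \<Longrightarrow> ratio x \<ge> 1"
  unfolding ratio_def using l1_ge_norm[of x]
  by (simp add: power_mono)

lemma ratio_le_l0: "ratio x \<le> real (l0norm x)"
  unfolding ratio_def using l1_sq_le[of x]
  by (cases "x = 0") (auto simp: divide_le_eq l0norm_def)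

lemma ratio_scale: "c \<noteq> 0 \<Longrightarrow> ratio (c *\<^sub>R x) = ratio x"
  unfolding ratio_def l1_scale by (simp add: power_mult_distrib)

lemma cont_l1: "continuous_on S l1norm"
  unfolding l1norm_def by (intro continuous_intros)

lemma cont_ratio: "continuous_on (S - {0}) ratio"
  unfolding ratio_def by (intro continuous_intros cont_l1) auto


lemma obj_ratio: "obj lam q A b x = lam * ratio x + q (A *v x - b)"
  unfolding obj_def ratio_def by simp

lemma closed_hyperrect:
  fixes lo hi :: "'n::finite \<Rightarrow> ereal"
  shows "closed (hyperrect lo hi)"
proof -
  have c1: "closed {x::real^'n. lo i \<le> ereal (x$i)}" for i
  proof (cases "lo i")
    case (real a) thus ?thesis by (simp add: closed_Collect_le continuous_intros)
  next
    case PInf thus ?thesis by simp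
  next
    case MInf thus ?thesis by simp
  qed
  have c2: "closed {x::real^'n. ereal (x$i) \<le> hi i}" for i
  proof (cases "hi i")
    case (real a) thus ?thesis by (simp add: closed_Collect_le continuous_intros)
  next
    case PInf thus ?thesis by simp
  next
    case MInf thus ?thesis by simp
  qed
  have "hyperrect lo hi = (\<Inter>i. {x. lo i \<le> ereal (x$i)} \<inter> {x. ereal (x$i) \<le> hi i})"
    unfolding hyperrect_def by auto
  thus ?thesis using c1 c2 by (auto intro!: closed_INT closed_Int)
qed

lemma attain:
  fixes f :: "real^'n \<Rightarrow> real"
  assumes "closed X" "continuous_on (X - {0}) f" "\<delta> > 0" "z \<in> X" "z \<noteq> 0"
    "\<forall>y\<in>X-{0}. norm y < \<delta> \<longrightarrow> f z \<le> f y" "\<forall>y\<in>X. norm y > R \<longrightarrow> f z \<le> f y"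
  shows "\<exists>x\<in>X-{0}. \<forall>y\<in>X-{0}. f x \<le> f y"
proof -
  define K where "K = insert z (X \<inter> {x. \<delta> \<le> norm x \<and> norm x \<le> R})"
  have "closed (X \<inter> {x. \<delta> \<le> norm x \<and> norm x \<le> R})"
    using assms(1) by (intro closed_Int closed_Collect_conj closed_Collect_le continuous_intros) auto
  moreover have "bounded (X \<inter> {x. \<delta> \<le> norm x \<and> norm x \<le> R})"
    unfolding bounded_iff by auto
  ultimately have "compact K" unfolding K_def by (simp add: compact_eq_bounded_closed)
  moreover have sub: "K \<subseteq> X - {0}" unfolding K_def using assms by auto
  ultimately obtain x where x: "x \<in> K" "\<forall>y\<in>K. f x \<le> f y"
    using continuous_attains_inf[of K f] continuous_on_subset[OF assms(2) sub]
    unfolding K_def by auto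
  have "f x \<le> f y" if y: "y \<in> X - {0}" for y
  proof (cases "\<delta> \<le> norm y \<and> norm y \<le> R")
    case True thus ?thesis using x y unfolding K_def by auto
  next
    case False
    hence "f z \<le> f y" using assms(6,7) y by auto
    moreover have "f x \<le> f z" using x unfolding K_def by auto
    ultimately show ?thesis by simp
  qed
  thus ?thesis using x sub by blast
qed

lemma opt_from_min:
  assumes "x \<in> X - {0}" "\<forall>y\<in>X-{0}. obj lam q A b x \<le> obj lam q A b y"
  shows "optimal_solutions lam q A b X \<noteq> {}"
proof -
  have "nu_star lam q A b X = ereal (obj lam q A b x)"
    unfolding nu_star_def
    by (rule antisym) (use assms in \<open>auto intro!: INF_lower2 INF_greatest\<close>)
  thus ?thesis using assms unfolding optimal_solutions_def by auto
qed

lemma cont_comp: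
  fixes q :: "real^'m \<Rightarrow> real"
  assumes "continuous_on UNIV q"
  shows "continuous_on S (\<lambda>x::real^'n. q (A *v x - b))"
proof -
  have "continuous_on S (\<lambda>x::real^'n. A *v x - b)"
    by (intro continuous_intros linear_continuous_on matrix_vector_mul_linear)
  thus ?thesis by (rule continuous_on_compose2[OF assms]) auto
qed

lemma main:
  fixes q :: "real^'m \<Rightarrow> real" and A :: "real^'n^'m"
  assumes lam: "lam > 0" and cont: "continuous_on UNIV q" and cl: "closed X"
    and sa: "standing_assm lam q A b X"
    and z: "z \<in> X" "z \<noteq> 0" and far: "\<forall>y\<in>X. norm y > R \<longrightarrow> obj lam q A b z \<le> obj lam q A b y"
  shows "optimal_solutions lam q A b X \<noteq> {}"
proof -
  let ?f = "obj lam q A b"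
  obtain x0 where x0: "x0 \<in> X - {0}" "?f x0 < lam + q (- b)"
    using sa unfolding standing_assm_def nu_star_def INF_less_iff by auto
  define e where "e = lam + q (- b) - ?f x0"
  have e: "e > 0" using x0 unfolding e_def by simp
  have "continuous_on UNIV (\<lambda>x::real^'n. q (A *v x - b))" by (rule cont_comp[OF cont])
  hence H: "\<forall>x\<in>UNIV. \<forall>e>0. \<exists>d>0. \<forall>x'\<in>UNIV. dist x' x < d \<longrightarrow> dist (q (A *v x' - b)) (q (A *v x - b)) < e"
    by (simp only: continuous_on_iff)
  obtain d where d: "d > 0" "\<forall>y\<in>UNIV. dist y 0 < d \<longrightarrow> dist (q (A *v y - b)) (q (A *v 0 - b)) < e"
    using H[rule_format, OF UNIV_I e, of 0] by (elim exE conjE)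
  have near: "?f x0 \<le> ?f y" if y: "y \<in> X - {0}" "norm y < d" for y
  proof -
    have "\<bar>q (A *v y - b) - q (- b)\<bar> < e" using d y by (simp add: dist_real_def)
    moreover have "lam * ratio y \<ge> lam" using ratio_ge1[of y] y lam by simp
    ultimately show ?thesis unfolding obj_ratio[of lam q A b y] e_def by simp
  qed
  define z' where "z' = (if ?f x0 \<le> ?f z then x0 else z)"
  have z': "z' \<in> X" "z' \<noteq> 0" "?f z' \<le> ?f x0" "?f z' \<le> ?f z"
    using x0 z unfolding z'_def by auto
  have contf: "continuous_on (X - {0}) ?f"
    unfolding obj_ratio
    by (rule continuous_on_add[OF continuous_on_mult[OF continuous_on_const cont_ratio] cont_comp[OF cont]])
  have "\<exists>x\<in>X-{0}. \<forall>y\<in>X-{0}. ?f x \<le> ?f y"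
  proof (rule attain[OF cl contf d(1) z'(1,2), of R])
    show "\<forall>y\<in>X - {0}. norm y < d \<longrightarrow> ?f z' \<le> ?f y"
      using near z'(3) by (meson order_trans)
    show "\<forall>y\<in>X. R < norm y \<longrightarrow> ?f z' \<le> ?f y"
      using far z'(4) by (meson order_trans)
  qed
  then obtain x where "x \<in> X - {0}" "\<forall>y\<in>X-{0}. ?f x \<le> ?f y" by blast
  thus ?thesis by (rule opt_from_min)
qed


lemma prod_ge_sum:
  fixes a :: "'a \<Rightarrow> real"
  assumes "finite I" "\<And>i. a i \<ge> 0"
  shows "1 + sum a I \<le> (\<Prod>i\<in>I. 1 + a i)"
  using assms(1)
proof (induction I rule: finite_induct)
  case empty thus ?case by simp
next
  case (insert x F)
  have p: "(\<Prod>i\<in>F. 1 + a i) \<ge> 1" using assms(2) by (intro prod_ge_1) auto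
  have "1 + sum a (insert x F) = 1 + a x + sum a F" using insert by simp
  also have "\<dots> \<le> (1 + a x) * (1 + sum a F)" using assms(2)[of x] sum_nonneg[of F a] assms(2)
    by (simp add: algebra_simps)
  also have "\<dots> \<le> (1 + a x) * (\<Prod>i\<in>F. 1 + a i)"
    using insert.IH assms(2)[of x] by (intro mult_left_mono) auto
  finally show ?case using insert by simp
qed

lemma pos1: "(0::real) < 1 + a^2/c^2"
proof -
  have "0 \<le> a^2/c^2" by simp
  thus ?thesis by linarith
qed

lemma nz1: "1 + a^2/c^2 \<noteq> (0::real)"
  using pos1[of a c] by linarith

lemma qC_ge: "\<gamma> > 0 \<Longrightarrow> qC \<gamma> y \<ge> ln (1 + (norm y)^2 / \<gamma>^2)"
proof -
  assume g: "\<gamma> > 0"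
  have "qC \<gamma> y = ln (\<Prod>i\<in>UNIV. 1 + (y$i)^2/\<gamma>^2)"
    unfolding qC_def by (subst ln_prod) (auto simp: nz1)
  moreover have "1 + (norm y)^2 / \<gamma>^2 = 1 + (\<Sum>i\<in>UNIV. (y$i)^2/\<gamma>^2)"
    unfolding norm_sq_sum by (simp add: sum_divide_distrib)
  moreover have "1 + (\<Sum>i\<in>UNIV. (y$i)^2/\<gamma>^2) \<le> (\<Prod>i\<in>UNIV. 1 + (y$i)^2/\<gamma>^2)"
    by (rule prod_ge_sum) auto
  moreover have "1 + (\<Sum>i\<in>UNIV. (y$i)^2/\<gamma>^2) > 0"
    by (intro add_pos_nonneg sum_nonneg) auto
  ultimately show ?thesis by simp
qed

lemma coer_qC: "\<gamma> > 0 \<Longrightarrow> \<exists>M. \<forall>y. norm y \<ge> M \<longrightarrow> qC \<gamma> y \<ge> C"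
proof -
  assume g: "\<gamma> > 0"
  show ?thesis
  proof (intro exI allI impI)
    fix y :: "real^'a" assume y: "norm y \<ge> \<gamma> * exp \<bar>C\<bar>"
    have e1: "exp \<bar>C\<bar> \<ge> 1" by simp
    have "exp \<bar>C\<bar> * \<gamma> \<le> norm y" using y by (simp only: mult.commute)
    hence "norm y / \<gamma> \<ge> exp \<bar>C\<bar>" using g by (simp only: pos_le_divide_eq)
    hence "(norm y / \<gamma>)^2 \<ge> (exp \<bar>C\<bar>)^2" by (intro power_mono) auto
    moreover have "(exp \<bar>C\<bar>)^2 \<ge> exp \<bar>C\<bar>" using e1 by (simp add: power2_eq_square)
    moreover have "exp \<bar>C\<bar> \<ge> exp C" by simp
    ultimately have "1 + (norm y)^2/\<gamma>^2 \<ge> exp C" unfolding power_divide by linarith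
    hence "ln (1 + (norm y)^2/\<gamma>^2) \<ge> C"
      using ln_ge_iff[OF pos1[of "norm y" \<gamma>]] by blast
    thus "qC \<gamma> y \<ge> C" using qC_ge[OF g, of y] by simp
  qed
qed

lemma coer_qG: "\<exists>M. \<forall>y. norm y \<ge> M \<longrightarrow> qG y \<ge> C"
proof (intro exI allI impI)
  fix y :: "real^'a" assume y: "norm y \<ge> 2 * \<bar>C\<bar> + 1"
  have "norm y * 1 \<le> norm y * norm y" using y by (intro mult_left_mono) auto
  hence "(norm y)^2 \<ge> norm y" by (simp add: power2_eq_square)
  thus "qG y \<ge> C" using y unfolding qG_def by simp
qed

lemma cont_qG: "continuous_on UNIV qG"
  unfolding qG_def by (intro continuous_intros)

lemma cont_qC: "\<gamma> > 0 \<Longrightarrow> continuous_on UNIV (qC \<gamma>)"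
  unfolding qC_def by (intro continuous_intros) (auto simp: nz1)

lemma cont_qR: "continuous_on UNIV (qR r)"
  unfolding qR_def by (intro continuous_intros)


lemma far:
  fixes q :: "real^'m \<Rightarrow> real" and A :: "real^'n^'m"
  assumes lam: "lam > 0" and s: "s > 0"
    and ss: "spherical_section s CARD('m) {x. A *v x = 0}"
    and xt: "xt \<in> argmin_on (\<lambda>x. q (A *v x - b)) X" and l0: "real (l0norm xt) < real CARD('m) / s"
    and coer: "\<And>C. \<exists>M. \<forall>y. norm y \<ge> M \<longrightarrow> q y \<ge> C"
  shows "\<exists>R. \<forall>y\<in>X. norm y > R \<longrightarrow> obj lam q A b xt \<le> obj lam q A b y"
proof -
  define m' where "m' = real CARD('m) / s"
  have m'0: "m' \<ge> 0" unfolding m'_def using s by simp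
  have ker: "ratio d \<ge> m'" if d: "A *v d = 0" "d \<noteq> 0" for d
  proof -
    let ?S = "(\<lambda>v. l1norm v / norm v) ` ({x. A *v x = 0} - {0})"
    have "bdd_below ?S" by (rule bdd_belowI[of _ 0]) (auto intro: divide_nonneg_nonneg l1_nonneg)
    hence "Inf ?S \<le> l1norm d / norm d" using d by (intro cInf_lower) auto
    hence "sqrt m' \<le> l1norm d / norm d" using ss unfolding spherical_section_def m'_def by linarith
    hence "(sqrt m')^2 \<le> (l1norm d / norm d)^2" using m'0 by (intro power_mono) auto
    thus ?thesis using m'0 unfolding ratio_def by (simp add: power_divide)
  qed
  have rxt: "ratio xt < m'" using ratio_le_l0[of xt] l0 unfolding m'_def by linarith
  define \<rho> where "\<rho> = (m' + ratio xt) / 2"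
  have \<rho>1: "\<rho> < m'" and \<rho>2: "ratio xt < \<rho>" using rxt unfolding \<rho>_def by auto
  define D where "D = sphere (0::real^'n) 1 \<inter> ratio -` {..\<rho>}"
  have "continuous_on (sphere (0::real^'n) 1) ratio"
    by (rule continuous_on_subset[OF cont_ratio[of UNIV]]) auto
  hence "closed D" unfolding D_def by (intro continuous_closed_preimage) auto
  hence cD: "compact D" unfolding D_def by (simp add: compact_eq_bounded_closed bounded_Int)
  have Dnz: "A *v d \<noteq> 0" if "d \<in> D" for d
  proof
    assume "A *v d = 0"
    moreover have "d \<noteq> 0" using that unfolding D_def by auto
    ultimately have "ratio d \<ge> m'" by (rule ker)
    thus False using that \<rho>1 unfolding D_def by auto
  qed
  have "\<exists>\<alpha>>0. \<forall>d\<in>D. \<alpha> \<le> norm (A *v d)"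
  proof (cases "D = {}")
    case True thus ?thesis by (intro exI[of _ 1]) auto
  next
    case False
    have "continuous_on D (\<lambda>d. norm (A *v d))"
      by (intro continuous_intros linear_continuous_on matrix_vector_mul_linear)
    then obtain d0 where "d0 \<in> D" "\<forall>d\<in>D. norm (A *v d0) \<le> norm (A *v d)"
      using continuous_attains_inf[OF cD False] by blast
    thus ?thesis using Dnz[of d0] by (intro exI[of _ "norm (A *v d0)"]) auto
  qed
  then obtain \<alpha> where \<alpha>: "\<alpha> > 0" "\<forall>d\<in>D. \<alpha> \<le> norm (A *v d)" by blast
  obtain M where M: "\<forall>y. norm y \<ge> M \<longrightarrow> q y \<ge> obj lam q A b xt" using coer by blast
  define R where "R = (\<bar>M\<bar> + norm b) / \<alpha>"
  have R0: "R \<ge> 0" unfolding R_def using \<alpha> by simp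
  have xtX: "xt \<in> X" and xtmin: "\<forall>y\<in>X. q (A *v xt - b) \<le> q (A *v y - b)"
    using xt unfolding argmin_on_def by auto
  show ?thesis
  proof (intro exI ballI impI)
    fix y assume yX: "y \<in> X" and yR: "norm y > R"
    have y0: "y \<noteq> 0" using yR R0 by auto
    define d where "d = (1 / norm y) *\<^sub>R y"
    have rd: "ratio d = ratio y" unfolding d_def using y0 by (simp add: ratio_scale)
    have nd: "norm d = 1" unfolding d_def using y0 by simp
    have yd: "y = norm y *\<^sub>R d" unfolding d_def using y0 by simp
    show "obj lam q A b xt \<le> obj lam q A b y"
    proof (cases "ratio y \<le> \<rho>")
      case False
      hence "lam * ratio xt \<le> lam * ratio y" using \<rho>2 lam by (intro mult_left_mono) auto
      moreover have "q (A *v xt - b) \<le> q (A *v y - b)" using xtmin yX by blast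
      ultimately show ?thesis unfolding obj_ratio by linarith
    next
      case True
      hence "d \<in> D" unfolding D_def using rd nd by auto
      hence nAd: "\<alpha> \<le> norm (A *v d)" using \<alpha> by auto
      have "A *v y = norm y *\<^sub>R (A *v d)" by (subst yd) (simp add: matrix_vector_mult_scaleR)
      hence "norm (A *v y) = norm y * norm (A *v d)" by simp
      also have "\<dots> \<ge> norm y * \<alpha>" using nAd by (intro mult_left_mono) auto
      finally have "norm (A *v y) \<ge> norm y * \<alpha>" .
      moreover have "norm y * \<alpha> > R * \<alpha>" using yR \<alpha> by simp
      moreover have "R * \<alpha> = \<bar>M\<bar> + norm b" unfolding R_def using \<alpha> by simp
      moreover have "norm (A *v y - b) \<ge> norm (A *v y) - norm b" by (rule norm_triangle_ineq2)
      ultimately have "norm (A *v y - b) \<ge> M" by linarith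
      hence "q (A *v y - b) \<ge> obj lam q A b xt" using M by blast
      moreover have "lam * ratio y \<ge> 0" using lam ratio_nonneg[of y] by simp
      ultimately show ?thesis unfolding obj_ratio[of lam q A b y] by linarith
    qed
  qed
qed


lemma main_bounded:
  fixes q :: "real^'m \<Rightarrow> real" and A :: "real^'n^'m"
  assumes "lam > 0" "continuous_on UNIV q" "closed X" "bounded X" "standing_assm lam q A b X"
  shows "optimal_solutions lam q A b X \<noteq> {}"
proof -
  obtain x0 where x0: "x0 \<in> X - {0}"
    using assms(5) unfolding standing_assm_def nu_star_def INF_less_iff by auto
  obtain R where R: "\<forall>x\<in>X. norm x \<le> R" using assms(4) unfolding bounded_iff by auto
  have fr: "\<forall>y\<in>X. norm y > R \<longrightarrow> obj lam q A b x0 \<le> obj lam q A b y"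
    using R by (meson not_le)
  have x1: "x0 \<in> X" and x2: "x0 \<noteq> 0" using x0 by auto
  show ?thesis by (rule main[OF assms(1,2,3,5) x1 x2 fr])
qed

lemma main_unb:
  fixes q :: "real^'m \<Rightarrow> real" and A :: "real^'n^'m"
  assumes "lam > 0" "continuous_on UNIV q" "closed X" "standing_assm lam q A b X"
    "s > 0" "spherical_section s CARD('m) {x. A *v x = 0}"
    "xt \<noteq> 0" "xt \<in> argmin_on (\<lambda>x. q (A *v x - b)) X" "real (l0norm xt) < real CARD('m) / s"
    "\<And>C. \<exists>M. \<forall>y. norm y \<ge> M \<longrightarrow> q y \<ge> C"
  shows "optimal_solutions lam q A b X \<noteq> {}"
proof -
  obtain R where fr: "\<forall>y\<in>X. norm y > R \<longrightarrow> obj lam q A b xt \<le> obj lam q A b y"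
    using far[OF assms(1,5,6,8,9,10)] by blast
  have xX: "xt \<in> X" using assms(8) unfolding argmin_on_def by auto
  show ?thesis by (rule main[OF assms(1,2,3,4) xX assms(7) fr])
qed

theorem corollary3p1:
  fixes lam \<gamma> :: real and r :: nat
    and A :: "real^'n^'m" and b :: "real^'m" and X :: "(real^'n) set"
  assumes lam: "lam > 0" and gam: "\<gamma> > 0" and r: "r \<ge> 1"
    and X: "is_closed_hyperrect X" and X0: "0 \<in> X"
  shows
   "(bounded X \<longrightarrow>
       (standing_assm lam qG A b X \<longrightarrow> optimal_solutions lam qG A b X \<noteq> {}) \<and>
       (standing_assm lam (qC \<gamma>) A b X \<longrightarrow> optimal_solutions lam (qC \<gamma>) A b X \<noteq> {}) \<and>
       (standing_assm lam (qR r) A b X \<longrightarrow> optimal_solutions lam (qR r) A b X \<noteq> {}))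
    \<and>
    (\<forall>s>0. CARD('m) < CARD('n) \<and> dim {x. A *v x = 0} = CARD('n) - CARD('m)
        \<and> spherical_section s CARD('m) {x. A *v x = 0} \<longrightarrow>
       (standing_assm lam qG A b X \<and>
          (\<exists>xt. xt \<noteq> 0 \<and> xt \<in> argmin_on (\<lambda>x. qG (A *v x - b)) X
                \<and> real (l0norm xt) < real CARD('m) / s)
          \<longrightarrow> optimal_solutions lam qG A b X \<noteq> {}) \<and>
       (standing_assm lam (qC \<gamma>) A b X \<and>
          (\<exists>xt. xt \<noteq> 0 \<and> xt \<in> argmin_on (\<lambda>x. qC \<gamma> (A *v x - b)) X
                \<and> real (l0norm xt) < real CARD('m) / s)
          \<longrightarrow> optimal_solutions lam (qC \<gamma>) A b X \<noteq> {}))"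
proof -
  obtain lo hi where "X = hyperrect lo hi" using X unfolding is_closed_hyperrect_def by blast
  hence cl: "closed X" using closed_hyperrect by simp
  have P1: "bounded X \<longrightarrow>
       (standing_assm lam qG A b X \<longrightarrow> optimal_solutions lam qG A b X \<noteq> {}) \<and>
       (standing_assm lam (qC \<gamma>) A b X \<longrightarrow> optimal_solutions lam (qC \<gamma>) A b X \<noteq> {}) \<and>
       (standing_assm lam (qR r) A b X \<longrightarrow> optimal_solutions lam (qR r) A b X \<noteq> {})"
  proof (intro impI conjI)
    assume bX: "bounded X"
    show "optimal_solutions lam qG A b X \<noteq> {}" if "standing_assm lam qG A b X"
      by (rule main_bounded[OF lam cont_qG cl bX that])
    show "optimal_solutions lam (qC \<gamma>) A b X \<noteq> {}" if "standing_assm lam (qC \<gamma>) A b X"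
      by (rule main_bounded[OF lam cont_qC[OF gam] cl bX that])
    show "optimal_solutions lam (qR r) A b X \<noteq> {}" if "standing_assm lam (qR r) A b X"
      by (rule main_bounded[OF lam cont_qR cl bX that])
  qed
  have P2: "\<forall>s>0. CARD('m) < CARD('n) \<and> dim {x. A *v x = 0} = CARD('n) - CARD('m)
        \<and> spherical_section s CARD('m) {x. A *v x = 0} \<longrightarrow>
       (standing_assm lam qG A b X \<and>
          (\<exists>xt. xt \<noteq> 0 \<and> xt \<in> argmin_on (\<lambda>x. qG (A *v x - b)) X
                \<and> real (l0norm xt) < real CARD('m) / s)
          \<longrightarrow> optimal_solutions lam qG A b X \<noteq> {}) \<and>
       (standing_assm lam (qC \<gamma>) A b X \<and>
          (\<exists>xt. xt \<noteq> 0 \<and> xt \<in> argmin_on (\<lambda>x. qC \<gamma> (A *v x - b)) X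
                \<and> real (l0norm xt) < real CARD('m) / s)
          \<longrightarrow> optimal_solutions lam (qC \<gamma>) A b X \<noteq> {})"
  proof (intro allI impI conjI)
    fix s :: real
    assume s: "s > 0" and h: "CARD('m) < CARD('n) \<and> dim {x. A *v x = 0} = CARD('n) - CARD('m)
        \<and> spherical_section s CARD('m) {x. A *v x = 0}"
    from h have ss: "spherical_section s CARD('m) {x. A *v x = 0}" by (elim conjE)
    show "optimal_solutions lam qG A b X \<noteq> {}" if "standing_assm lam qG A b X \<and>
          (\<exists>xt. xt \<noteq> 0 \<and> xt \<in> argmin_on (\<lambda>x. qG (A *v x - b)) X
                \<and> real (l0norm xt) < real CARD('m) / s)"
    proof -
      from that have sa: "standing_assm lam qG A b X" by (elim conjE)
      from that obtain xt where x1: "xt \<noteq> 0" and x2: "xt \<in> argmin_on (\<lambda>x. qG (A *v x - b)) X"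
          and x3: "real (l0norm xt) < real CARD('m) / s" by (elim conjE exE)
      show ?thesis by (rule main_unb[OF lam cont_qG cl sa s ss x1 x2 x3 coer_qG])
    qed
    show "optimal_solutions lam (qC \<gamma>) A b X \<noteq> {}" if "standing_assm lam (qC \<gamma>) A b X \<and>
          (\<exists>xt. xt \<noteq> 0 \<and> xt \<in> argmin_on (\<lambda>x. qC \<gamma> (A *v x - b)) X
                \<and> real (l0norm xt) < real CARD('m) / s)"
    proof -
      from that have sa: "standing_assm lam (qC \<gamma>) A b X" by (elim conjE)
      from that obtain xt where x1: "xt \<noteq> 0" and x2: "xt \<in> argmin_on (\<lambda>x. qC \<gamma> (A *v x - b)) X"
          and x3: "real (l0norm xt) < real CARD('m) / s" by (elim conjE exE)
      show ?thesis by (rule main_unb[OF lam cont_qC[OF gam] cl sa s ss x1 x2 x3 coer_qC[OF gam]])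
    qed
  qed
  show ?thesis using P1 P2 by (rule conjI)
qed

end
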